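(* For all $n\ge0$, $$F_{2n}(x,y,q)=\sum_{k=0}^nx^{n-k}y^kq^{\binom{n+k}2-nk}\begin{bmatrix}n\\k\end{bmatrix}_qF_{n-k}(xq^{n+k},yq^{n+k},q).$$
   Context: $\Pi_n(13/2,123)$ is the set of layered matchings of $[n]$: set partitions whose blocks are consecutive intervals $[1,i_1]/\dots/[i_{k-1}+1,n]$, each of size $1$ or $2$. $\Pi_0(13/2,123)$ consists of the empty partition. For $\pi=B_1/\dots/B_k$ with $\min B_1<\dots<\min B_k$, $rb(\pi)$ is the number of pairs $(b,B_j)$ with $b\in B_i$, $j>i$, $\max B_j>b$. Let $s(\pi)$ and $d(\pi)$ be the numbers of blocks of size $1$ and $2$. Define $F_n(x,y,q)=\sum_{\pi\in\Pi_n(13/2,123)}x^{s(\pi)}y^{d(\pi)}q^{rb(\pi)}$. $F_n(xq^a,yq^a,q)$ denotes the substitution $x\mapsto xq^a$, $y\mapsto yq^a$. The $q$-binomial coefficient is $\begin{bmatrix}n\\k\end{bmatrix}_q=\prod_{i=1}^k\frac{q^{n-i+1}-1}{q^i-1}$ for $0\le k\le n$. *)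

theory Defs
  imports Main
begin

fun intervals :: "nat \<Rightarrow> nat list \<Rightarrow> nat set list" where
  "intervals a [] = []"
| "intervals a (c # cs) = {a..<a + c} # intervals (a + c) cs"

text \<open>Layered matchings of [n]: set partitions into consecutive intervals
  [1,i1]/.../[i_(k-1)+1,n], each of size 1 or 2, listed as B_1,...,B_k with
  increasing minima.\<close>
definition layered :: "nat \<Rightarrow> nat set list set" where
  "layered n = intervals 1 ` {cs. set cs \<subseteq> {1, 2} \<and> sum_list cs = n}"

definition rb :: "nat set list \<Rightarrow> nat" where
  "rb Bs = card {(b, j). j < length Bs \<and> (\<exists>i<j. b \<in> Bs ! i) \<and> b < Max (Bs ! j)}"

definition sblocks :: "nat set list \<Rightarrow> nat" where
  "sblocks Bs = length (filter (\<lambda>B. card B = 1) Bs)"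

definition dblocks :: "nat set list \<Rightarrow> nat" where
  "dblocks Bs = length (filter (\<lambda>B. card B = 2) Bs)"

definition F :: "nat \<Rightarrow> 'a::comm_ring_1 \<Rightarrow> 'a \<Rightarrow> 'a \<Rightarrow> 'a" where
  "F n x y q = (\<Sum>Bs\<in>layered n. x ^ sblocks Bs * y ^ dblocks Bs * q ^ rb Bs)"

definition qbinom :: "nat \<Rightarrow> nat \<Rightarrow> 'a::field \<Rightarrow> 'a" where
  "qbinom n k q = (\<Prod>i=1..k. (q ^ (n + 1 - i) - 1) / (q ^ i - 1))"

end

theory Submission
  imports Defs
begin
definition Cs :: "nat \<Rightarrow> nat list set" where
  "Cs n = {cs. set cs \<subseteq> {1,2} \<and> sum_list cs = n}"

lemma Cs_0: "Cs 0 = {[]}"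
proof -
  have "cs \<in> Cs 0 \<Longrightarrow> cs = []" for cs by (cases cs) (auto simp: Cs_def)
  then show ?thesis by (auto simp: Cs_def)
qed

lemma Cs_1: "Cs 1 = {[1]}"
  unfolding Cs_def
proof (auto)
  fix cs :: "nat list" assume a: "set cs \<subseteq> {Suc 0, 2}" "sum_list cs = Suc 0"
  then show "cs = [Suc 0]"
  proof (cases cs)
    case (Cons c r)
    with a have "c = 1 \<or> c = 2" by auto
    with a Cons show ?thesis by (cases r) auto
  qed auto
qed

lemma Cs_1': "Cs (Suc 0) = {[1]}" using Cs_1 by simp

lemma Cs_SS: "Cs (Suc (Suc N)) = (Cons 1) ` Cs (Suc N) \<union> (Cons 2) ` Cs N"
proof
  show "Cs (Suc (Suc N)) \<subseteq> (Cons 1) ` Cs (Suc N) \<union> (Cons 2) ` Cs N"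
  proof
    fix cs assume a: "cs \<in> Cs (Suc (Suc N))"
    then obtain c r where cs: "cs = c # r" unfolding Cs_def by (cases cs) auto
    with a have "c = 1 \<or> c = 2" unfolding Cs_def by auto
    with a cs show "cs \<in> (Cons 1) ` Cs (Suc N) \<union> (Cons 2) ` Cs N"
      unfolding Cs_def by auto
  qed
qed (auto simp: Cs_def)

lemma finite_Cs: "finite (Cs n)"
proof (induction n rule: less_induct)
  case (less n)
  show ?case
  proof (cases n)
    case 0 then show ?thesis by (simp add: Cs_0)
  next
    case (Suc m)
    show ?thesis
    proof (cases m)
      case 0 with Suc show ?thesis by (simp add: Cs_1')
    next
      case (Suc k)
      with \<open>n = Suc m\<close> less show ?thesis by (simp add: Cs_SS)
    qed
  qed
qed

fun Rs :: "nat list \<Rightarrow> nat" where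
  "Rs [] = 0"
| "Rs (c # cs) = c * length cs + Rs cs"

definition c1 :: "nat list \<Rightarrow> nat" where "c1 cs = length (filter (\<lambda>c. c = 1) cs)"
definition c2 :: "nat list \<Rightarrow> nat" where "c2 cs = length (filter (\<lambda>c. c = 2) cs)"

definition w :: "nat list \<Rightarrow> 'a::comm_ring_1 \<Rightarrow> 'a \<Rightarrow> 'a \<Rightarrow> 'a" where
  "w cs x y q = x ^ c1 cs * y ^ c2 cs * q ^ Rs cs"

lemma len_c12: "set cs \<subseteq> {1,2} \<Longrightarrow> length cs = c1 cs + c2 cs"
  by (induction cs) (auto simp: c1_def c2_def)

lemma w_cons1: "set cs \<subseteq> {1,2} \<Longrightarrow> w (Suc 0 # cs) x y q = x * w cs (x*q) (y*q) q"
  by (simp add: w_def c1_def c2_def len_c12[of cs] power_mult_distrib power_add algebra_simps)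

lemma w_cons2: "set cs \<subseteq> {1,2} \<Longrightarrow> w (2 # cs) x y q = y * w cs (x*q^2) (y*q^2) q"
  by (simp add: w_def c1_def c2_def len_c12[of cs] power_mult_distrib power_add power_mult algebra_simps)

fun Fr :: "nat \<Rightarrow> 'a::comm_ring_1 \<Rightarrow> 'a \<Rightarrow> 'a \<Rightarrow> 'a" where
  "Fr 0 x y q = 1"
| "Fr (Suc 0) x y q = x"
| "Fr (Suc (Suc n)) x y q = x * Fr (Suc n) (x*q) (y*q) q + y * Fr n (x*q^2) (y*q^2) q"

lemma sum_w: "(\<Sum>cs\<in>Cs n. w cs x y q) = Fr n x y q"
proof (induction n x y q rule: Fr.induct)
  case (1 x y q) then show ?case by (simp add: Cs_0 w_def c1_def c2_def)
next
  case (2 x y q) then show ?case by (simp add: Cs_1' w_def c1_def c2_def)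
next
  case (3 n x y q)
  have d: "(Cons 1) ` Cs (Suc n) \<inter> (Cons 2) ` Cs n = {}" by auto
  have "(\<Sum>cs\<in>Cs (Suc (Suc n)). w cs x y q) =
      (\<Sum>cs\<in>(Cons 1) ` Cs (Suc n). w cs x y q) + (\<Sum>cs\<in>(Cons 2) ` Cs n. w cs x y q)"
    unfolding Cs_SS by (rule sum.union_disjoint) (auto simp: finite_Cs)
  also have "(\<Sum>cs\<in>(Cons 1) ` Cs (Suc n). w cs x y q) = (\<Sum>cs\<in>Cs (Suc n). w (1#cs) x y q)"
    by (rule sum.reindex_cong[of "Cons 1"]) auto
  also have "\<dots> = (\<Sum>cs\<in>Cs (Suc n). x * w cs (x*q) (y*q) q)"
    by (rule sum.cong) (auto simp: Cs_def w_cons1)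
  also have "(\<Sum>cs\<in>(Cons 2) ` Cs n. w cs x y q) = (\<Sum>cs\<in>Cs n. w (2#cs) x y q)"
    by (rule sum.reindex_cong[of "Cons 2"]) auto
  also have "\<dots> = (\<Sum>cs\<in>Cs n. y * w cs (x*q^2) (y*q^2) q)"
    by (rule sum.cong) (auto simp: Cs_def w_cons2)
  finally show ?case using 3 by (simp add: sum_distrib_left[symmetric])
qed

lemma map_card_intervals: "map card (intervals a cs) = cs"
  by (induction cs arbitrary: a) auto

lemma length_intervals: "length (intervals a cs) = length cs"
  by (induction cs arbitrary: a) auto

lemma inj_intervals: "inj (intervals a)"
  by (metis map_card_intervals injI)

lemma sblocks_int: "sblocks (intervals a cs) = c1 cs"
  by (induction cs arbitrary: a) (auto simp: sblocks_def c1_def)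

lemma dblocks_int: "dblocks (intervals a cs) = c2 cs"
  by (induction cs arbitrary: a) (auto simp: dblocks_def c2_def)

definition Sset :: "nat set list \<Rightarrow> (nat \<times> nat) set" where
  "Sset Bs = {(b, j). j < length Bs \<and> (\<exists>i<j. b \<in> Bs ! i) \<and> b < Max (Bs ! j)}"

lemma ex_less_Suc_shift: "(\<exists>i<Suc j. P i) \<longleftrightarrow> P 0 \<or> (\<exists>i<j. P (Suc i))"
  by (metis less_Suc_eq_0_disj Suc_less_eq)

lemma Sset_cons: "Sset (B # Bs) = (\<lambda>(b,j). (b, Suc j)) ` Sset Bs \<union>
   {p. \<exists>b j. p = (b, Suc j) \<and> j < length Bs \<and> b \<in> B \<and> b < Max (Bs ! j)}"
proof (rule set_eqI)
  fix p :: "nat \<times> nat"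
  obtain b j where p: "p = (b, j)" by (cases p)
  show "p \<in> Sset (B # Bs) \<longleftrightarrow> p \<in> (\<lambda>(b,j). (b, Suc j)) ` Sset Bs \<union>
   {p. \<exists>b j. p = (b, Suc j) \<and> j < length Bs \<and> b \<in> B \<and> b < Max (Bs ! j)}"
  proof (cases j)
    case 0 then show ?thesis by (auto simp: p Sset_def)
  next
    case (Suc k)
    have "p \<in> Sset (B # Bs) \<longleftrightarrow> k < length Bs \<and> (b \<in> B \<or> (\<exists>i<k. b \<in> Bs ! i)) \<and> b < Max (Bs ! k)"
      unfolding Sset_def p Suc by (simp add: ex_less_Suc_shift)
    moreover have "p \<in> (\<lambda>(b,j). (b, Suc j)) ` Sset Bs \<longleftrightarrow> k < length Bs \<and> (\<exists>i<k. b \<in> Bs ! i) \<and> b < Max (Bs ! k)"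
      unfolding Sset_def p Suc by auto
    ultimately show ?thesis by (auto simp: p Suc)
  qed
qed

lemma int_ge: "B \<in> set (intervals a cs) \<Longrightarrow> b \<in> B \<Longrightarrow> a \<le> b"
  by (induction cs arbitrary: a) fastforce+

lemma int_ne: "set cs \<subseteq> {1,2} \<Longrightarrow> B \<in> set (intervals a cs) \<Longrightarrow> B \<noteq> {}"
  by (induction cs arbitrary: a) auto

lemma int_fin: "B \<in> set (intervals a cs) \<Longrightarrow> finite B"
  by (induction cs arbitrary: a) auto

lemma finite_Sset: "(\<And>B. B \<in> set Bs \<Longrightarrow> finite B) \<Longrightarrow> finite (Sset Bs)"
proof -
  assume f: "\<And>B. B \<in> set Bs \<Longrightarrow> finite B"
  have "Sset Bs \<subseteq> (\<Union> (set Bs)) \<times> {..<length Bs}"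
    unfolding Sset_def by auto (meson less_trans nth_mem)
  moreover have "finite ((\<Union> (set Bs)) \<times> {..<length Bs})" using f by auto
  ultimately show ?thesis by (rule finite_subset)
qed

lemma rb_int: "set cs \<subseteq> {1,2} \<Longrightarrow> rb (intervals a cs) = Rs cs"
proof (induction cs arbitrary: a)
  case Nil then show ?case by (simp add: rb_def)
next
  case (Cons c cs)
  define Bs where "Bs = intervals (a + c) cs"
  have cs: "set cs \<subseteq> {1,2}" and c: "c \<in> {1,2}" using Cons.prems by auto
  have lenB: "length Bs = length cs" by (simp add: Bs_def length_intervals)
  have T: "{p. \<exists>b j. p = (b, Suc j) \<and> j < length Bs \<and> b \<in> {a..<a+c} \<and> b < Max (Bs ! j)}
      = {a..<a+c} \<times> (Suc ` {..<length cs})"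
  proof -
    have "b < Max (Bs ! j)" if "j < length Bs" "b < a + c" for b j
    proof -
      have m: "Bs ! j \<in> set Bs" using that by simp
      then have "Bs ! j \<noteq> {}" "finite (Bs ! j)" using int_ne[OF cs] int_fin unfolding Bs_def by auto
      then obtain z where z: "z \<in> Bs ! j" by blast
      then have "a + c \<le> z" using int_ge m unfolding Bs_def by blast
      moreover have "z \<le> Max (Bs ! j)" using z \<open>finite (Bs ! j)\<close> by simp
      ultimately show ?thesis using that by linarith
    qed
    then show ?thesis using lenB by auto
  qed
  have "Sset (intervals a (c # cs)) = (\<lambda>(b,j). (b, Suc j)) ` Sset Bs \<union> {a..<a+c} \<times> (Suc ` {..<length cs})"
    using Sset_cons[of "{a..<a+c}" Bs] T by (simp add: Bs_def)
  moreover have "(\<lambda>(b,j). (b, Suc j)) ` Sset Bs \<inter> {a..<a+c} \<times> (Suc ` {..<length cs}) = {}"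
  proof -
    have "a + c \<le> b" if "(b, j) \<in> Sset Bs" for b j
    proof -
      from that obtain i where i: "i < j" "j < length cs" "b \<in> intervals (a+c) cs ! i"
        unfolding Sset_def Bs_def by (auto simp: length_intervals)
      then have "intervals (a+c) cs ! i \<in> set (intervals (a+c) cs)"
        by (simp add: length_intervals)
      with i show ?thesis using int_ge by blast
    qed
    then show ?thesis by fastforce
  qed
  moreover have "finite (Sset Bs)" using finite_Sset int_fin unfolding Bs_def by blast
  moreover have "inj_on (\<lambda>(b,j). (b, Suc j)) (Sset Bs)" by (auto simp: inj_on_def)
  ultimately have "card (Sset (intervals a (c # cs))) = card (Sset Bs) + c * length cs"
    by (simp add: card_Un_disjoint card_image card_cartesian_product card_image)
  moreover have "card (Sset Bs) = Rs cs" using Cons.IH[OF cs] unfolding rb_def Sset_def Bs_def by simp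
  ultimately show ?case unfolding rb_def Sset_def[symmetric] by simp
qed

lemma F_eq_Fr: "F n x y q = Fr n x y q"
proof -
  have L: "layered n = intervals 1 ` Cs n" unfolding layered_def Cs_def by simp
  have "F n x y q = (\<Sum>cs\<in>Cs n. w cs x y q)"
    unfolding F_def L
    by (rule sum.reindex_cong[of "intervals 1"])
       (auto simp: inj_on_def inj_intervals[THEN injD] Cs_def w_def sblocks_int dblocks_int rb_int)
  then show ?thesis by (simp add: sum_w)
qed

fun qb :: "nat \<Rightarrow> nat \<Rightarrow> 'a::comm_ring_1 \<Rightarrow> 'a" where
  "qb n 0 q = 1"
| "qb 0 (Suc k) q = 0"
| "qb (Suc n) (Suc k) q = q ^ Suc k * qb n (Suc k) q + qb n k q"

lemma qb_gt: "n < k \<Longrightarrow> qb n k q = 0"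
proof (induction n arbitrary: k)
  case 0 then show ?case by (cases k) auto
next
  case (Suc n) then show ?case by (cases k) auto
qed

lemma choose2_Suc: "Suc m choose 2 = m + (m choose 2)"
  by (simp add: numeral_2_eq_2)

definition cc :: "nat \<Rightarrow> nat \<Rightarrow> 'a::comm_ring_1 \<Rightarrow> 'a" where
  "cc n k q = q ^ ((n choose 2) + (k choose 2)) * qb n k q"

lemma cc_00: "cc 0 0 q = 1" by (simp add: cc_def numeral_2_eq_2)

lemma cc_gt: "n < k \<Longrightarrow> cc n k q = 0" by (simp add: cc_def qb_gt)

lemma cc_S0: "cc (Suc n) 0 q = q ^ n * cc n 0 q"
  by (simp add: cc_def choose2_Suc power_add)

lemma cc_SS: "cc (Suc n) (Suc k) q = q ^ (n + Suc k) * cc n (Suc k) q + q ^ (n + k) * cc n k q"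
  by (simp add: cc_def choose2_Suc power_add algebra_simps)

definition Gf :: "'a::comm_ring_1 \<Rightarrow> 'a \<Rightarrow> 'a \<Rightarrow> nat \<Rightarrow> nat \<Rightarrow> 'a" where
  "Gf x y q N a = Fr N (x * q ^ a) (y * q ^ a) q"

lemma Gf_SS: "Gf x y q (Suc (Suc N)) a = x * q ^ a * Gf x y q (Suc N) (Suc a) + y * q ^ a * Gf x y q N (a + 2)"
  by (simp add: Gf_def power_add power2_eq_square algebra_simps)

lemma main:
  fixes x y q :: "'a::comm_ring_1"
  shows "2 * n \<le> N \<Longrightarrow> Gf x y q N a =
    (\<Sum>k=0..n. x ^ (n - k) * y ^ k * q ^ (n * a) * cc n k q * Gf x y q (N - n - k) (a + n + k))"
proof (induction n arbitrary: N a)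
  case 0 then show ?case by (simp add: cc_00)
next
  case (Suc n)
  let ?G = "Gf x y q"
  define X where "X k = x ^ (n - k) * y ^ k * q ^ (n * a) * cc n k q * (x * q ^ (a + n + k) * ?G (N - Suc n - k) (a + Suc n + k))" for k
  define Y where "Y k = x ^ (n - k) * y ^ k * q ^ (n * a) * cc n k q * (y * q ^ (a + n + k) * ?G (N - Suc n - Suc k) (a + Suc n + Suc k))" for k
  define U where "U k = x ^ (Suc n - k) * y ^ k * q ^ (Suc n * a) * cc (Suc n) k q * ?G (N - Suc n - k) (a + Suc n + k)" for k
  have "?G N a = (\<Sum>k=0..n. x ^ (n - k) * y ^ k * q ^ (n * a) * cc n k q * ?G (N - n - k) (a + n + k))"
    using Suc by simp
  also have "\<dots> = (\<Sum>k=0..n. X k + Y k)"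
  proof (rule sum.cong)
    fix k assume "k \<in> {0..n}"
    then have k: "k \<le> n" by simp
    define M where "M = N - Suc n - Suc k"
    have e: "N - n - k = Suc (Suc M)" using k Suc.prems unfolding M_def by simp
    have e2: "N - Suc n - k = Suc M" using k Suc.prems unfolding M_def by simp
    have a1: "Suc (a+n+k) = a + Suc n + k" "a+n+k+2 = a + Suc n + Suc k" by simp_all
    have "?G (N - n - k) (a + n + k) = x * q ^ (a + n + k) * ?G (Suc M) (Suc (a + n + k)) +
       y * q ^ (a + n + k) * ?G M (a + n + k + 2)"
      unfolding e by (rule Gf_SS)
    then have "?G (N - n - k) (a + n + k) = x * q ^ (a + n + k) * ?G (N - Suc n - k) (a + Suc n + k) +
       y * q ^ (a + n + k) * ?G (N - Suc n - Suc k) (a + Suc n + Suc k)"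
      by (simp only: a1 e2 M_def[symmetric])
    then show "x ^ (n - k) * y ^ k * q ^ (n * a) * cc n k q * ?G (N - n - k) (a + n + k) = X k + Y k"
      unfolding X_def Y_def by (simp add: algebra_simps)
  qed simp
  also have "\<dots> = (\<Sum>k=0..n. X k) + (\<Sum>k=0..n. Y k)" by (rule sum.distrib)
  also have "(\<Sum>k=0..n. X k) = (\<Sum>k=0..Suc n. X k)"
    by (simp add: X_def cc_gt)
  also have "\<dots> = X 0 + (\<Sum>k=0..n. X (Suc k))"
    by (simp add: sum.atLeast0_atMost_Suc_shift o_def del: sum.cl_ivl_Suc)
  also have "X 0 = U 0" by (simp add: X_def U_def cc_S0 power_add algebra_simps)
  also have "(\<Sum>k=0..n. X (Suc k)) = (\<Sum>k=0..n. x ^ (n - k) * y ^ Suc k * q ^ (Suc n * a) * (q ^ (n + Suc k) * cc n (Suc k) q) * ?G (N - Suc n - Suc k) (a + Suc n + Suc k))"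
  proof (rule sum.cong)
    fix k assume "k \<in> {0..n}"
    then have k: "k \<le> n" by simp
    show "X (Suc k) = x ^ (n - k) * y ^ Suc k * q ^ (Suc n * a) * (q ^ (n + Suc k) * cc n (Suc k) q) * ?G (N - Suc n - Suc k) (a + Suc n + Suc k)"
    proof (cases "k = n")
      case True then show ?thesis by (simp add: X_def cc_gt)
    next
      case False
      then have "n - k = Suc (n - Suc k)" using k by simp
      then show ?thesis unfolding X_def by (simp add: power_add algebra_simps)
    qed
  qed simp
  also have "(\<Sum>k=0..n. Y k) = (\<Sum>k=0..n. x ^ (n - k) * y ^ Suc k * q ^ (Suc n * a) * (q ^ (n + k) * cc n k q) * ?G (N - Suc n - Suc k) (a + Suc n + Suc k))"
    by (rule sum.cong) (simp_all add: Y_def power_add algebra_simps)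
  also have "U 0 + (\<Sum>k=0..n. x ^ (n - k) * y ^ Suc k * q ^ (Suc n * a) * (q ^ (n + Suc k) * cc n (Suc k) q) * ?G (N - Suc n - Suc k) (a + Suc n + Suc k)) +
     (\<Sum>k=0..n. x ^ (n - k) * y ^ Suc k * q ^ (Suc n * a) * (q ^ (n + k) * cc n k q) * ?G (N - Suc n - Suc k) (a + Suc n + Suc k))
     = U 0 + (\<Sum>k=0..n. U (Suc k))"
    unfolding U_def cc_SS by (simp add: sum.distrib[symmetric] algebra_simps)
  also have "\<dots> = (\<Sum>k=0..Suc n. U k)" by (simp add: sum.atLeast0_atMost_Suc_shift o_def del: sum.cl_ivl_Suc)
  finally show ?case unfolding U_def .
qed

definition Aq :: "nat \<Rightarrow> nat \<Rightarrow> 'a::field \<Rightarrow> 'a" where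
  "Aq n k q = (\<Prod>i=1..k. q ^ (n + 1 - i) - 1)"
definition Dq :: "nat \<Rightarrow> 'a::field \<Rightarrow> 'a" where
  "Dq k q = (\<Prod>i=1..k. q ^ i - 1)"

lemma Aq_0: "Aq n 0 q = 1" by (simp add: Aq_def)
lemma Dq_0: "Dq 0 q = 1" by (simp add: Dq_def)
lemma Aq_Suc: "Aq n (Suc k) q = Aq n k q * (q ^ (n - k) - 1)"
  by (simp add: Aq_def)
lemma Dq_Suc: "Dq (Suc k) q = Dq k q * (q ^ Suc k - 1)"
  by (simp add: Dq_def)

lemma Aq_SS: "Aq (Suc n) (Suc k) q = (q ^ Suc n - 1) * Aq n k q"
proof (induction k)
  case 0 then show ?case by (simp add: Aq_Suc Aq_0)
next
  case (Suc k)
  have "Aq (Suc n) (Suc (Suc k)) q = Aq (Suc n) (Suc k) q * (q ^ (Suc n - Suc k) - 1)"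
    by (rule Aq_Suc)
  also have "\<dots> = (q ^ Suc n - 1) * Aq n (Suc k) q" using Suc by (simp add: Aq_Suc)
  finally show ?case .
qed

lemma Aq_gt: "n < k \<Longrightarrow> Aq n k q = 0"
proof (induction k)
  case 0 then show ?case by simp
next
  case (Suc k)
  show ?case
  proof (cases "k = n")
    case True then show ?thesis by (simp add: Aq_Suc)
  next
    case False then show ?thesis using Suc by (simp add: Aq_Suc)
  qed
qed

lemma qb_Dq: "qb n k q * Dq k q = Aq n k q"
proof (induction n arbitrary: k)
  case 0 then show ?case by (cases k) (auto simp: Aq_0 Dq_0 Aq_gt)
next
  case (Suc n)
  show ?case
  proof (cases k)
    case 0 then show ?thesis by (simp add: Aq_0 Dq_0)
  next
    case (Suc k')
    have "qb (Suc n) (Suc k') q * Dq (Suc k') q =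
        q ^ Suc k' * (qb n (Suc k') q * Dq (Suc k') q) + (qb n k' q * Dq k' q) * (q ^ Suc k' - 1)"
      by (simp add: Dq_Suc algebra_simps)
    also have "\<dots> = q ^ Suc k' * Aq n (Suc k') q + Aq n k' q * (q ^ Suc k' - 1)"
      using Suc.IH by simp
    also have "\<dots> = (q ^ Suc n - 1) * Aq n k' q"
    proof (cases "k' \<le> n")
      case True
      have "q ^ Suc k' * q ^ (n - k') = q ^ Suc n"
        using True by (simp flip: power_add)
      have "q ^ Suc k' * Aq n (Suc k') q + Aq n k' q * (q ^ Suc k' - 1)
          = Aq n k' q * (q ^ Suc k' * q ^ (n - k') - 1)"
        by (simp add: Aq_Suc algebra_simps)
      also have "\<dots> = (q ^ Suc n - 1) * Aq n k' q" using \<open>q ^ Suc k' * q ^ (n - k') = q ^ Suc n\<close>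
        by (simp only: mult.commute)
      finally show ?thesis .
    next
      case False then show ?thesis by (simp add: Aq_gt)
    qed
    also have "\<dots> = Aq (Suc n) (Suc k') q" by (simp add: Aq_SS)
    finally show ?thesis using Suc by simp
  qed
qed

lemma qbinom_eq:
  fixes q :: "'a::field"
  assumes "\<forall>i. 1 \<le> i \<and> i \<le> n \<longrightarrow> q ^ i \<noteq> 1" "k \<le> n"
  shows "qbinom n k q = qb n k q"
proof -
  have "Dq k q \<noteq> 0" using assms unfolding Dq_def by auto
  moreover have "qbinom n k q = Aq n k q / Dq k q"
    unfolding qbinom_def Aq_def Dq_def by (rule prod_dividef)
  ultimately show ?thesis using qb_Dq[of n k q] by (simp add: field_simps) (metis mult_left_cancel)
qed

lemma choose_add: "(n + k choose 2) = (n choose 2) + (k choose 2) + n * k"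
  by (induction k) (simp_all add: choose2_Suc)

theorem theorem4p7:
  fixes x y q :: "'a::field" and n :: nat
  assumes "\<forall>i. 1 \<le> i \<and> i \<le> n \<longrightarrow> q ^ i \<noteq> 1"
  shows "F (2 * n) x y q =
    (\<Sum>k=0..n. x ^ (n - k) * y ^ k * q ^ ((n + k choose 2) - n * k) * qbinom n k q
       * F (n - k) (x * q ^ (n + k)) (y * q ^ (n + k)) q)"
proof -
  have "F (2 * n) x y q = Gf x y q (2 * n) 0" by (simp add: Gf_def F_eq_Fr)
  also have "\<dots> = (\<Sum>k=0..n. x ^ (n - k) * y ^ k * q ^ (n * 0) * cc n k q * Gf x y q (2 * n - n - k) (0 + n + k))"
    by (rule main) simp
  also have "\<dots> = (\<Sum>k=0..n. x ^ (n - k) * y ^ k * q ^ ((n + k choose 2) - n * k) * qbinom n k q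
       * F (n - k) (x * q ^ (n + k)) (y * q ^ (n + k)) q)"
  proof (rule sum.cong)
    fix k assume "k \<in> {0..n}"
    then have k: "k \<le> n" by simp
    have "cc n k q = q ^ ((n + k choose 2) - n * k) * qbinom n k q"
      unfolding cc_def choose_add using qbinom_eq[OF assms k] by simp
    moreover have "Gf x y q (2 * n - n - k) (0 + n + k) = F (n - k) (x * q ^ (n + k)) (y * q ^ (n + k)) q"
      by (simp add: Gf_def F_eq_Fr)
    ultimately show "x ^ (n - k) * y ^ k * q ^ (n * 0) * cc n k q * Gf x y q (2 * n - n - k) (0 + n + k) =
      x ^ (n - k) * y ^ k * q ^ ((n + k choose 2) - n * k) * qbinom n k q
       * F (n - k) (x * q ^ (n + k)) (y * q ^ (n + k)) q" by simp
  qed simp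
  finally show ?thesis .
qed

end
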